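(* Let $n\ge2$ be an integer and $\tau=\inf\{t\ge0: p_t\ge n\}$ for the Markov chain $(p_t)$ with $p_0=1$ defined in the context. Then $\mathbb{E}[\tau]\le (n^2-n+2)/2$.
   Context: $(p_t)_{t\ge0}$ is a time-homogeneous Markov chain on the positive integers with $p_0=1$ and transitions: if $p_t=p\ge2$, then $\mathbb{P}(p_{t+1}=p+j)=(1/2)^{j+2}$ for $j\in\{-1,0,1,2,\dots\}$; if $p_t=1$, then $\mathbb{P}(p_{t+1}=1+j)=(1/2)^{j+1}$ for $j\in\{0,1,2,\dots\}$. (It models the position of a $*$ symbol, started in the first position, in the deterministic-scan bounding chain; $\tau$ is the number of scans until it reaches position $n$.) *)

theory Defs
  imports "HOL-Probability.Probability"
begin

text \<open>State 0 is never visited; its row is set to 0.\<close>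
definition trans_prob :: "nat \<Rightarrow> nat \<Rightarrow> real" where
  "trans_prob p q =
     (if p = 1 then (if 1 \<le> q then (1/2) ^ q else 0)
      else if 2 \<le> p then (if p \<le> q + 1 then (1/2) ^ (q + 2 - p) else 0)
      else 0)"

text \<open>Hitting time inf {t >= 0 : f t >= n}, with inf of the empty set = infinity.\<close>
definition hitting_time :: "nat \<Rightarrow> (nat \<Rightarrow> nat) \<Rightarrow> enat" where
  "hitting_time n f = (INF t\<in>{t. n \<le> f t}. enat t)"

end

theory Submission
  imports Defs
begin

definition Qf :: "real \<Rightarrow> real" where "Qf x = (x^2 - x + 2)/2"
definition gf :: "real \<Rightarrow> real" where "gf x = (x-1)*(x-2)/2"
definition Vf :: "nat \<Rightarrow> nat \<Rightarrow> real" where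
  "Vf n j = (if j < n then Qf (real n) - gf (real j) else 0)"

lemma geo_sum:
  assumes "a \<le> b"
  shows "(\<Sum>j\<in>{a..<b}. (1/2::real)^(j-a+1)) = 1 - (1/2)^(b-a)"
  using assms
proof (induction b rule: dec_induct)
  case base then show ?case by simp
next
  case (step b)
  have "Suc b - a = Suc (b - a)" using step.hyps by simp
  moreover have "b - a + 1 = Suc (b-a)" by simp
  ultimately show ?case using step by (simp add: sum.atLeastLessThan_Suc)
qed

lemma g_sum:
  assumes "a \<le> b"
  shows "(\<Sum>j\<in>{a..<b}. (1/2::real)^(j-a+1) * gf (real j)) = Qf (real a) - (1/2)^(b-a) * Qf (real b)"
  using assms
proof (induction b rule: dec_induct)
  case base then show ?case by (simp add: Qf_def)
next
  case (step b)
  define x :: real where "x = (1/2)^(b-a)"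
  define S where "S = (\<Sum>j\<in>{a..<b}. (1/2::real)^(j-a+1) * gf (real j))"
  have e1: "(1/2::real)^(Suc b - a) = x/2" using step.hyps unfolding x_def
    by (simp add: Suc_diff_le)
  have e2: "(1/2::real)^(b - a + 1) = x/2" unfolding x_def by simp
  have key: "2 * Qf (real b) - gf (real b) = Qf (real (Suc b))"
    by (simp add: Qf_def gf_def field_simps power2_eq_square)
  have "(\<Sum>j\<in>{a..<Suc b}. (1/2::real)^(j-a+1) * gf (real j)) = S + x/2 * gf (real b)"
    using step.hyps e2 unfolding S_def by (simp add: sum.atLeastLessThan_Suc)
  also have "\<dots> = Qf (real a) - x * Qf (real b) + x/2 * gf (real b)"
    using step.IH unfolding S_def x_def by simp
  also have "\<dots> = Qf (real a) - x/2 * (2 * Qf (real b) - gf (real b))"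
    by (simp add: algebra_simps)
  also have "\<dots> = Qf (real a) - (1/2)^(Suc b - a) * Qf (real (Suc b))"
    using key e1 by simp
  finally show ?case .
qed

lemma tel_sum:
  assumes "a \<le> b"
  shows "(\<Sum>j\<in>{a..<b}. (1/2::real)^(j-a+1) * (Qf (real b) - gf (real j))) = Qf (real b) - Qf (real a)"
proof -
  have "(\<Sum>j\<in>{a..<b}. (1/2::real)^(j-a+1) * (Qf (real b) - gf (real j)))
      = Qf (real b) * (\<Sum>j\<in>{a..<b}. (1/2::real)^(j-a+1)) - (\<Sum>j\<in>{a..<b}. (1/2::real)^(j-a+1) * gf (real j))"
    unfolding right_diff_distrib sum_subtractf by (simp add: sum_distrib_left mult.commute)
  also have "\<dots> = Qf (real b) - Qf (real a)"
    unfolding geo_sum[OF assms] g_sum[OF assms] by (simp add: algebra_simps)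
  finally show ?thesis .
qed

lemma Qf_ge2: assumes "2 \<le> n" shows "2 \<le> Qf (real n)"
proof -
  have "real n \<ge> 2" using assms by simp
  then have "real n * (real n - 1) \<ge> 2 * 1" by (intro mult_mono) auto
  then show ?thesis unfolding Qf_def by (simp add: power2_eq_square algebra_simps)
qed

lemma drift:
  assumes n2: "2 \<le> n" and qn: "q < n"
  shows "(\<Sum>j<n. trans_prob q j * Vf n j) \<le> Vf n q - 1"
proof -
  consider "q = 0" | "q = 1" | "2 \<le> q" by linarith
  then show ?thesis
  proof cases
    case 1
    then have "Vf n q = Qf (real n) - 1" using qn by (simp add: Vf_def gf_def)
    moreover have "(\<Sum>j<n. trans_prob q j * Vf n j) = 0" using 1 by (simp add: trans_prob_def)
    ultimately show ?thesis using Qf_ge2[OF n2] by simp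
  next
    case 2
    have "(\<Sum>j<n. trans_prob q j * Vf n j) = (\<Sum>j\<in>{0..<n}. trans_prob q j * Vf n j)"
      by (simp add: lessThan_atLeast0)
    also have "\<dots> = trans_prob q 0 * Vf n 0 + (\<Sum>j\<in>{Suc 0..<n}. trans_prob q j * Vf n j)"
      using n2 by (subst sum.atLeast_Suc_lessThan) auto
    also have "\<dots> = (\<Sum>j\<in>{1..<n}. (1/2::real)^(j-1+1) * (Qf (real n) - gf (real j)))"
      using 2 by (auto simp: trans_prob_def Vf_def intro!: sum.cong)
    also have "\<dots> = Qf (real n) - Qf 1"
      using tel_sum[of 1 n] n2 by simp
    also have "\<dots> = Vf n q - 1" using 2 qn by (simp add: Vf_def gf_def Qf_def)
    finally show ?thesis by simp
  next
    case 3
    define a where "a = q - 1"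
    have an: "a \<le> n" using qn a_def by simp
    have "(\<Sum>j<n. trans_prob q j * Vf n j) = (\<Sum>j\<in>{0..<n}. trans_prob q j * Vf n j)"
      by (simp add: lessThan_atLeast0)
    also have "\<dots> = (\<Sum>j\<in>{0..<a}. trans_prob q j * Vf n j) + (\<Sum>j\<in>{a..<n}. trans_prob q j * Vf n j)"
      using an by (simp add: sum.atLeastLessThan_concat)
    also have "(\<Sum>j\<in>{0..<a}. trans_prob q j * Vf n j) = 0"
      using 3 a_def by (auto simp: trans_prob_def intro!: sum.neutral)
    also have "(\<Sum>j\<in>{a..<n}. trans_prob q j * Vf n j) = (\<Sum>j\<in>{a..<n}. (1/2::real)^(j-a+1) * (Qf (real n) - gf (real j)))"
    proof (intro sum.cong refl)
      fix j assume j: "j \<in> {a..<n}"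
      then have e: "j + 2 - q = j - a + 1" using 3 a_def by auto
      have "q \<le> j + 1" "\<not> q = 1" "2 \<le> q" using j 3 a_def by auto
      then show "trans_prob q j * Vf n j = (1/2::real)^(j-a+1) * (Qf (real n) - gf (real j))"
        using j unfolding trans_prob_def Vf_def e by simp
    qed
    also have "\<dots> = Qf (real n) - Qf (real a)"
      using tel_sum[OF an] by simp
    also have "Qf (real a) = gf (real q) + 1"
      using 3 a_def by (simp add: Qf_def gf_def of_nat_diff power2_eq_square field_simps)
    finally show ?thesis using qn by (simp add: Vf_def)
  qed
qed


lemma gf_nonneg: "0 \<le> gf (real j)"
proof (cases "j \<le> 1")
  case True then have "j = 0 \<or> j = 1" by auto
  then show ?thesis by (auto simp: gf_def)
next
  case False then have "real j \<ge> 2" by simp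
  then show ?thesis unfolding gf_def by simp
qed

lemma Qf_pos: "0 \<le> Qf (real n)"
proof -
  have "real n \<le> real n * real n" by (cases n) auto
  then show ?thesis unfolding Qf_def by (simp add: power2_eq_square)
qed

lemma Vf_le: "Vf n j \<le> Qf (real n)"
  using gf_nonneg[of j] Qf_pos[of n] by (auto simp: Vf_def)

lemma Vf_nonneg: assumes "1 \<le> n" shows "0 \<le> Vf n j"
proof (cases "j < n")
  case True
  then have jn: "real j \<le> real n - 1" by linarith
  have "real j * real j \<le> (real n - 1) * (real n - 1)"
    using jn by (intro mult_mono) auto
  then have "(real j - 1) * (real j - 2) \<le> real n ^ 2 - real n + 2"
    using assms by (simp add: power2_eq_square algebra_simps)
  then show ?thesis using True by (simp add: Vf_def Qf_def gf_def)
qed (simp add: Vf_def)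

lemma hit_sum:
  fixes f :: "nat \<Rightarrow> nat"
  shows "ennreal_of_enat (hitting_time n f) = (\<Sum>s. if (\<forall>i\<le>s. f i < n) then 1 else 0)"
proof (cases "\<exists>t. n \<le> f t")
  case True
  define k where "k = (LEAST t. n \<le> f t)"
  have hk: "n \<le> f k" using True LeastI_ex unfolding k_def by metis
  have "hitting_time n f = enat k"
    unfolding hitting_time_def
  proof (rule antisym)
    show "(INF t\<in>{t. n \<le> f t}. enat t) \<le> enat k" using hk by (intro INF_lower) auto
    show "enat k \<le> (INF t\<in>{t. n \<le> f t}. enat t)"
      by (rule INF_greatest) (auto simp: k_def intro: Least_le)
  qed
  moreover have iff: "(\<forall>i\<le>s. f i < n) \<longleftrightarrow> s < k" for s
  proof
    assume "\<forall>i\<le>s. f i < n" then show "s < k" using hk by (metis not_le not_less)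
  next
    assume "s < k"
    show "\<forall>i\<le>s. f i < n"
    proof (intro allI impI)
      fix i assume "i \<le> s"
      then have "i < (LEAST t. n \<le> f t)" using \<open>s < k\<close> k_def by simp
      then have "\<not> n \<le> f i" by (rule not_less_Least)
      then show "f i < n" by simp
    qed
  qed
  moreover have "(\<Sum>s. if (\<forall>i\<le>s. f i < n) then 1 else (0::ennreal)) = (\<Sum>s<k. 1)"
    by (subst suminf_finite[of "{..<k}"]) (auto simp: iff)
  ultimately show ?thesis by simp
next
  case False
  then have "{t. n \<le> f t} = {}" by auto
  then have "hitting_time n f = \<infinity>" unfolding hitting_time_def by (simp add: top_enat_def)
  moreover have "(\<Sum>s. if (\<forall>i\<le>s. f i < n) then 1 else (0::ennreal)) = (\<Sum>s. ennreal 1)"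
    using False by (simp add: not_le)
  moreover have "(\<Sum>s. ennreal 1) = \<top>"
    by (rule summable_iff_suminf_neq_top) (auto simp: summable_const_iff)
  ultimately show ?thesis by simp
qed


locale mchain = prob_space M for M :: "'a measure" +
  fixes p :: "nat \<Rightarrow> 'a \<Rightarrow> nat" and n :: nat
  assumes meas[measurable]: "\<And>t. p t \<in> measurable M (count_space UNIV)"
    and stepP: "\<And>t h j. measure M {\<omega>\<in>space M. (\<forall>i\<le>t. p i \<omega> = h i) \<and> p (Suc t) \<omega> = j}
                 = measure M {\<omega>\<in>space M. \<forall>i\<le>t. p i \<omega> = h i} * trans_prob (h t) j"
    and n2: "2 \<le> n"
begin

definition H :: "nat \<Rightarrow> nat list set" where "H t = {xs. length xs = Suc t \<and> set xs \<subseteq> {..<n}}"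
definition E :: "nat list \<Rightarrow> 'a set" where "E xs = {\<omega>\<in>space M. \<forall>i<length xs. p i \<omega> = xs!i}"
definition A :: "nat \<Rightarrow> 'a set" where "A t = {\<omega>\<in>space M. \<forall>i\<le>t. p i \<omega> < n}"
definition S :: "nat \<Rightarrow> real" where "S t = (\<Sum>xs\<in>H t. prob (E xs))"
definition Phi :: "nat \<Rightarrow> real" where "Phi t = (\<Sum>xs\<in>H t. prob (E xs) * Vf n (last xs))"

lemma H_finite: "finite (H t)"
proof -
  have "H t = {xs. set xs \<subseteq> {..<n} \<and> length xs = Suc t}" unfolding H_def by auto
  then show ?thesis using finite_lists_length_eq[of "{..<n}" "Suc t"] by simp
qed

lemma E_sets[measurable]: "E xs \<in> events"
  unfolding E_def by measurable

lemma A_sets[measurable]: "A t \<in> events"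
  unfolding A_def by measurable

lemma A_eq: "A t = (\<Union>xs\<in>H t. E xs)"
proof
  show "A t \<subseteq> (\<Union>xs\<in>H t. E xs)"
  proof
    fix \<omega> assume w: "\<omega> \<in> A t"
    define xs where "xs = map (\<lambda>i. p i \<omega>) [0..<Suc t]"
    have "xs \<in> H t" using w unfolding xs_def H_def A_def by auto
    moreover have "\<omega> \<in> E xs" using w unfolding xs_def E_def A_def by (auto simp del: upt_Suc)
    ultimately show "\<omega> \<in> (\<Union>xs\<in>H t. E xs)" by blast
  qed
next
  show "(\<Union>xs\<in>H t. E xs) \<subseteq> A t"
  proof
    fix \<omega> assume "\<omega> \<in> (\<Union>xs\<in>H t. E xs)"
    then obtain xs where xs: "xs \<in> H t" "\<omega> \<in> E xs" by blast
    have "p i \<omega> < n" if "i \<le> t" for i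
    proof -
      have "i < length xs" using xs that unfolding H_def by auto
      then have "p i \<omega> = xs ! i" "xs ! i \<in> set xs" using xs unfolding E_def by auto
      then show ?thesis using xs unfolding H_def by auto
    qed
    then show "\<omega> \<in> A t" using xs unfolding E_def A_def by auto
  qed
qed

lemma E_disj: "disjoint_family_on E (H t)"
  unfolding disjoint_family_on_def
proof (intro ballI impI)
  fix xs ys assume xs: "xs \<in> H t" and ys: "ys \<in> H t" and ne: "xs \<noteq> ys"
  have len: "length xs = length ys" using xs ys unfolding H_def by auto
  then obtain i where i: "i < length xs" "xs ! i \<noteq> ys ! i" using ne nth_equalityI by metis
  show "E xs \<inter> E ys = {}" using i len unfolding E_def by auto
qed

lemma prob_A: "prob (A t) = S t"
  unfolding A_eq S_def
  by (rule finite_measure_finite_Union) (auto simp: H_finite E_disj)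

lemma H_Suc: "H (Suc t) = (\<lambda>(xs,j). xs @ [j]) ` (H t \<times> {..<n})"
proof
  show "H (Suc t) \<subseteq> (\<lambda>(xs,j). xs @ [j]) ` (H t \<times> {..<n})"
  proof
    fix ys assume ys: "ys \<in> H (Suc t)"
    then have "ys \<noteq> []" unfolding H_def by auto
    then have eq: "ys = butlast ys @ [last ys]" by simp
    have "last ys \<in> set ys" using \<open>ys \<noteq> []\<close> by simp
    then have "last ys < n" using ys unfolding H_def by auto
    have "butlast ys \<in> H t"
      using ys \<open>ys \<noteq> []\<close> unfolding H_def by (auto dest: in_set_butlastD)
    then show "ys \<in> (\<lambda>(xs,j). xs @ [j]) ` (H t \<times> {..<n})" using eq \<open>last ys < n\<close>
      by (metis (no_types, lifting) SigmaI case_prod_conv image_eqI lessThan_iff)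
  qed
next
  show "(\<lambda>(xs,j). xs @ [j]) ` (H t \<times> {..<n}) \<subseteq> H (Suc t)"
    unfolding H_def by auto
qed

lemma H_inj: "inj_on (\<lambda>(xs,j). xs @ [j]) (H t \<times> {..<n})"
  by (auto simp: inj_on_def)

lemma E_snoc:
  assumes xs: "xs \<in> H t"
  shows "prob (E (xs @ [j])) = prob (E xs) * trans_prob (last xs) j"
proof -
  have len: "length xs = Suc t" using xs unfolding H_def by auto
  have s1: "{\<omega>\<in>space M. (\<forall>i\<le>t. p i \<omega> = (xs@[j]) ! i) \<and> p (Suc t) \<omega> = j} = E (xs @ [j])"
    unfolding E_def using len by (auto simp: less_Suc_eq nth_append less_Suc_eq_le)
  have s2: "{\<omega>\<in>space M. \<forall>i\<le>t. p i \<omega> = (xs@[j]) ! i} = E xs"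
    unfolding E_def using len by (auto simp: nth_append less_Suc_eq_le)
  have "xs \<noteq> []" using len by auto
  then have l: "(xs @ [j]) ! t = last xs" using len
    by (simp add: nth_append last_conv_nth)
  show ?thesis using stepP[of t "\<lambda>i. (xs@[j]) ! i" j] s1 s2 l by simp
qed

lemma Phi_step: "Phi (Suc t) \<le> Phi t - S t"
proof -
  have "Phi (Suc t) = (\<Sum>(xs,j)\<in>H t \<times> {..<n}. prob (E (xs @ [j])) * Vf n (last (xs @ [j])))"
    unfolding Phi_def H_Suc by (subst sum.reindex[OF H_inj]) (simp add: case_prod_unfold)
  also have "\<dots> = (\<Sum>xs\<in>H t. \<Sum>j<n. prob (E (xs @ [j])) * Vf n j)"
    by (simp add: sum.cartesian_product)
  also have "\<dots> = (\<Sum>xs\<in>H t. prob (E xs) * (\<Sum>j<n. trans_prob (last xs) j * Vf n j))"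
    by (intro sum.cong refl) (simp add: E_snoc sum_distrib_left mult.assoc)
  also have "\<dots> \<le> (\<Sum>xs\<in>H t. prob (E xs) * (Vf n (last xs) - 1))"
  proof (intro sum_mono mult_left_mono)
    fix xs assume xs: "xs \<in> H t"
    then have "xs \<noteq> []" unfolding H_def by auto
    then have "last xs \<in> set xs" by simp
    then have "last xs < n" using xs unfolding H_def by auto
    then show "(\<Sum>j<n. trans_prob (last xs) j * Vf n j) \<le> Vf n (last xs) - 1"
      using drift[OF n2] by blast
  qed simp
  also have "\<dots> = Phi t - S t"
    unfolding Phi_def S_def by (simp add: right_diff_distrib sum_subtractf)
  finally show ?thesis .
qed

lemma Phi_nonneg: "0 \<le> Phi t"
  unfolding Phi_def using n2 by (intro sum_nonneg mult_nonneg_nonneg Vf_nonneg) auto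

lemma Phi_le: "Phi t \<le> Qf (real n)"
proof -
  have "Phi t \<le> (\<Sum>xs\<in>H t. prob (E xs) * Qf (real n))"
    unfolding Phi_def by (intro sum_mono mult_left_mono Vf_le) auto
  also have "\<dots> = S t * Qf (real n)" unfolding S_def by (simp add: sum_distrib_right)
  also have "\<dots> \<le> 1 * Qf (real n)"
    using prob_A[of t] Qf_pos[of n] prob_le_1[of "A t"] by (intro mult_right_mono) (auto simp: prob_le_1)
  finally show ?thesis by simp
qed

lemma partial: "(\<Sum>s<t. prob (A s)) \<le> Qf (real n)"
proof -
  have "(\<Sum>s<t. S s) + Phi t \<le> Phi 0" for t
  proof (induction t)
    case 0 then show ?case by simp
  next
    case (Suc t) then show ?case using Phi_step[of t] by simp
  qed
  then have "(\<Sum>s<t. S s) \<le> Qf (real n)"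
    using Phi_nonneg[of t] Phi_le[of 0] by (smt (verit))
  then show ?thesis by (simp add: prob_A)
qed

lemma main: "(\<integral>\<^sup>+ \<omega>. ennreal_of_enat (hitting_time n (\<lambda>t. p t \<omega>)) \<partial>M) \<le> ennreal (Qf (real n))"
proof -
  have "(\<integral>\<^sup>+ \<omega>. ennreal_of_enat (hitting_time n (\<lambda>t. p t \<omega>)) \<partial>M)
      = (\<integral>\<^sup>+ \<omega>. (\<Sum>s. indicator (A s) \<omega>) \<partial>M)"
  proof (rule nn_integral_cong)
    fix \<omega> assume w: "\<omega> \<in> space M"
    show "ennreal_of_enat (hitting_time n (\<lambda>t. p t \<omega>)) = (\<Sum>s. indicator (A s) \<omega>)"
      unfolding hit_sum using w by (simp add: A_def indicator_def of_bool_def)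
  qed
  also have "\<dots> = (\<Sum>s. \<integral>\<^sup>+ \<omega>. indicator (A s) \<omega> \<partial>M)"
    by (rule nn_integral_suminf) measurable
  also have "\<dots> = (\<Sum>s. ennreal (prob (A s)))"
    by (simp add: emeasure_eq_measure)
  also have "\<dots> \<le> ennreal (Qf (real n))"
  proof (rule suminf_le_const)
    show "summable (\<lambda>s. ennreal (prob (A s)))" by (rule summableI)
    fix t show "(\<Sum>s<t. ennreal (prob (A s))) \<le> ennreal (Qf (real n))"
      using partial[of t] by (simp add: sum_ennreal ennreal_leI)
  qed
  finally show ?thesis .
qed

end

theorem lemma5:
  fixes M :: "'a measure" and p :: "nat \<Rightarrow> 'a \<Rightarrow> nat" and n :: nat
  assumes "prob_space M"
    and "\<And>t. p t \<in> measurable M (count_space UNIV)"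
    and "AE \<omega> in M. p 0 \<omega> = 1"
    and "\<And>t h j. measure M {\<omega>\<in>space M. (\<forall>i\<le>t. p i \<omega> = h i) \<and> p (Suc t) \<omega> = j}
                 = measure M {\<omega>\<in>space M. \<forall>i\<le>t. p i \<omega> = h i} * trans_prob (h t) j"
    and "2 \<le> n"
  shows "(\<integral>\<^sup>+ \<omega>. ennreal_of_enat (hitting_time n (\<lambda>t. p t \<omega>)) \<partial>M)
           \<le> ennreal ((real n ^ 2 - real n + 2) / 2)"
proof -
  interpret mchain M p n
    using assms by (intro mchain.intro mchain_axioms.intro) auto
  show ?thesis using main by (simp add: Qf_def)
qed

end
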